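(* For any $\alpha>-1$, $\nu>0$ and $x>0$, $$\frac{L_{\nu+1}^{\alpha-1}(-x)}{L_{\nu}^{\alpha}(-x)}>\frac{\alpha+x-1+\sqrt{(\alpha+x+1)^2+4\nu x}}{2(\nu+1)} .$$
   Context: $L_\nu^\alpha$ denotes the Laguerre function $L_\nu^\alpha(x)=\dfrac{\Gamma(\nu+\alpha+1)}{\Gamma(\nu+1)\Gamma(\alpha+1)}\,{}_1F_1(-\nu;\alpha+1;x)$, which reduces to the generalized Laguerre polynomial when $\nu$ is a nonnegative integer. *)

theory Defs
  imports "HOL-Analysis.Analysis"
begin

text \<open>Laguerre function
  L_nu^alpha(x) = Gamma(nu+alpha+1) / (Gamma(nu+1) Gamma(alpha+1)) * 1F1(-nu; alpha+1; x),
  written with the regularized Kummer series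
  1F1(a;b;x)/Gamma(b) = sum_k (a)_k x^k / (k! Gamma(b+k)),
  where 1/Gamma is the entire function rGamma. For alpha+1 not a nonpositive
  integer this is literally the defining formula; otherwise it is its
  (standard) continuous extension in alpha.\<close>

definition laguerre_fun :: "real \<Rightarrow> real \<Rightarrow> real \<Rightarrow> real" where
  "laguerre_fun \<nu> \<alpha> x =
     Gamma (\<nu> + \<alpha> + 1) / Gamma (\<nu> + 1) *
     (\<Sum>k. pochhammer (-\<nu>) k * x ^ k / fact k * rGamma (\<alpha> + 1 + real k))"

end

theory Submission
  imports Defs
begin

lemma first_pos:
  fixes f f' :: "real \<Rightarrow> real" and a :: real
  assumes der: "\<And>x. (f has_real_derivative f' x) (at x)"
    and a: "a \<ge> 0" "f a > 0" "\<And>y. 0 < y \<Longrightarrow> y \<le> a \<Longrightarrow> f y > 0"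
    and crit: "\<And>x. x > 0 \<Longrightarrow> (\<forall>y. 0 < y \<and> y < x \<longrightarrow> f y > 0) \<Longrightarrow> f x = 0 \<Longrightarrow> f' x > 0"
  shows "\<And>x. x > 0 \<Longrightarrow> f x > 0"
proof (rule ccontr)
  fix x1 assume x1: "x1 > 0" "\<not> f x1 > 0"
  have cont: "continuous_on UNIV f"
    using DERIV_isCont[OF der] by (simp add: continuous_at_imp_continuous_on)
  have x1a: "x1 > a"
  proof (rule ccontr)
    assume "\<not> x1 > a" hence "x1 \<le> a" by simp
    thus False using a(3)[of x1] x1 by simp
  qed
  define S where "S = {a..x1} \<inter> {x. f x \<le> 0}"
  have "closed {x. f x \<le> 0}"
    using cont by (intro closed_Collect_le continuous_on_const) auto
  hence cS: "compact S" unfolding S_def by (intro compact_Int_closed) auto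
  have x1S: "x1 \<in> S" using x1 x1a unfolding S_def by (simp add: not_less)
  hence nS: "S \<noteq> {}" by blast
  obtain x0 where x0: "x0 \<in> S" "\<And>t. t \<in> S \<Longrightarrow> x0 \<le> t"
    using compact_attains_inf[OF cS nS] by blast
  have fx0: "f x0 \<le> 0" "a \<le> x0" "x0 \<le> x1" using x0 unfolding S_def by auto
  have x0a: "x0 > a" using fx0 a(2) by (metis antisym_conv1 not_less)
  have below: "f y > 0" if "0 < y" "y < x0" for y
  proof (cases "y \<le> a")
    case True thus ?thesis using a(3) that by auto
  next
    case False
    show ?thesis
    proof (rule ccontr)
      assume "\<not> f y > 0"
      hence "y \<in> S" using False that fx0 unfolding S_def by auto
      thus False using x0(2)[of y] that by simp
    qed
  qed
  show False
  proof (cases "f x0 = 0")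
    case False
    hence "f x0 < 0" using fx0 by auto
    then obtain z where z: "a \<le> z" "z \<le> x0" "f z = 0"
    proof -
      have "continuous_on {a..x0} f" using continuous_on_subset[OF cont] by blast
      thus ?thesis using IVT2'[of f x0 0 a] a(2) x0a \<open>f x0 < 0\<close> that by force
    qed
    have "z \<noteq> a" using z a(2) by auto
    moreover have "z \<noteq> x0" using z False by auto
    ultimately have "0 < z" "z < x0" using z a(1) by auto
    hence "f z > 0" using below by blast
    thus False using z by auto
  next
    case True
    have "f' x0 > 0" using crit[of x0] True below x0a a(1) by auto
    then obtain e where e: "e > 0" "\<And>h. h > 0 \<Longrightarrow> h < e \<Longrightarrow> f (x0 - h) < f x0"
      using DERIV_pos_inc_left[OF der] by blast
    define h where "h = min (e/2) (x0/2)"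
    have "h > 0" "h < e" "x0 - h > 0" "x0 - h < x0" using e x0a a(1) unfolding h_def by auto
    hence "f (x0 - h) < f x0" "f (x0 - h) > 0" using e(2)[of h] below[of "x0 - h"] by auto
    thus False using True by simp
  qed
qed

definition Ac :: "real \<Rightarrow> real \<Rightarrow> nat \<Rightarrow> real" where
  "Ac \<nu> c n = pochhammer (-\<nu>) n / fact n * rGamma (c + real n)"

lemma Ac_Suc: "(real n + 1) * (c + real n) * Ac \<nu> c (Suc n) = (real n - \<nu>) * Ac \<nu> c n"
proof -
  have r: "(c + real n) * rGamma (c + real (Suc n)) = rGamma (c + real n)"
    using rGamma_plus1[of "c + real n"] by (simp add: add_ac)
  have f: "fact (Suc n) = (real n + 1) * fact n" by (simp add: fact_Suc)
  have "(real n + 1) * (c + real n) * Ac \<nu> c (Suc n)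
      = ((real n + 1) / fact (Suc n)) * pochhammer (-\<nu>) (Suc n) * ((c + real n) * rGamma (c + real (Suc n)))"
    unfolding Ac_def by (simp add: field_simps)
  also have "(real n + 1) / fact (Suc n) = 1 / fact n" unfolding f by (rule nonzero_divide_mult_cancel_left) simp
  finally show ?thesis unfolding r Ac_def by (simp add: pochhammer_Suc field_simps)
qed


lemma Ac_Suc': "c + real n > 0 \<Longrightarrow> Ac \<nu> c (Suc n) = (real n - \<nu>) * Ac \<nu> c n / ((real n + 1) * (c + real n))"
proof -
  assume "c + real n > 0"
  hence "(real n + 1) * (c + real n) \<noteq> 0" by simp
  thus ?thesis using Ac_Suc[of n c \<nu>] by (metis nonzero_mult_div_cancel_left)
qed

lemma Ac_summable:
  assumes "c > 0" "\<nu> > 0"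
  shows "summable (\<lambda>n. Ac \<nu> c n * t ^ n)"
proof (rule summable_ratio_test[where c="1/2" and N="nat \<lceil>\<nu> + 2*\<bar>t\<bar>\<rceil>"])
  fix n assume n: "n \<ge> nat \<lceil>\<nu> + 2*\<bar>t\<bar>\<rceil>"
  hence "\<lceil>\<nu> + 2*\<bar>t\<bar>\<rceil> \<le> int n" by (simp add: nat_le_iff)
  hence n1: "\<nu> + 2*\<bar>t\<bar> \<le> real n" by (simp add: ceiling_le_iff)
  have cn: "c + real n > 0" using assms by simp
  have fac: "\<bar>real n - \<nu>\<bar> * \<bar>t\<bar> \<le> (real n + 1) * (c + real n) / 2"
  proof -
    have "\<bar>real n - \<nu>\<bar> \<le> real n + 1" using n1 assms by auto
    moreover have "\<bar>t\<bar> \<le> (c + real n) / 2" using n1 assms by auto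
    ultimately have "\<bar>real n - \<nu>\<bar> * \<bar>t\<bar> \<le> (real n + 1) * ((c + real n) / 2)"
      by (intro mult_mono) auto
    thus ?thesis by simp
  qed
  have "norm (Ac \<nu> c (Suc n) * t ^ Suc n)
      = (\<bar>real n - \<nu>\<bar> * \<bar>t\<bar> / ((real n + 1) * (c + real n))) * norm (Ac \<nu> c n * t ^ n)"
  proof -
    have D: "(real n + 1) * (c + real n) > 0" using cn by simp
    have "\<bar>Ac \<nu> c (Suc n)\<bar> = \<bar>real n - \<nu>\<bar> * \<bar>Ac \<nu> c n\<bar> / ((real n + 1) * (c + real n))"
      using cn D by (simp add: Ac_Suc' abs_mult abs_divide)
    thus ?thesis by (simp add: abs_mult power_abs)
  qed
  also have "\<dots> \<le> (1/2) * norm (Ac \<nu> c n * t ^ n)"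
  proof (rule mult_right_mono)
    show "\<bar>real n - \<nu>\<bar> * \<bar>t\<bar> / ((real n + 1) * (c + real n)) \<le> 1/2"
      using fac cn by (simp add: divide_simps)
  qed simp
  finally show "norm (Ac \<nu> c (Suc n) * t ^ Suc n) \<le> 1/2 * norm (Ac \<nu> c n * t ^ n)" .
qed simp


definition F0 :: "real \<Rightarrow> real \<Rightarrow> real \<Rightarrow> real" where
  "F0 \<nu> c t = (\<Sum>n. Ac \<nu> c n * t ^ n)"
definition F1 :: "real \<Rightarrow> real \<Rightarrow> real \<Rightarrow> real" where
  "F1 \<nu> c t = (\<Sum>n. diffs (Ac \<nu> c) n * t ^ n)"
definition F2 :: "real \<Rightarrow> real \<Rightarrow> real \<Rightarrow> real" where
  "F2 \<nu> c t = (\<Sum>n. diffs (diffs (Ac \<nu> c)) n * t ^ n)"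

lemma shift_sums:
  fixes g :: "nat \<Rightarrow> real"
  assumes "summable (\<lambda>n. diffs g n * t ^ n)"
  shows "(\<lambda>n. real n * g n * t ^ n) sums (t * (\<Sum>n. diffs g n * t ^ n))"
proof -
  have "(\<lambda>n. t * (diffs g n * t ^ n)) sums (t * (\<Sum>n. diffs g n * t ^ n))"
    using assms by (intro sums_mult summable_sums)
  moreover have "(\<lambda>n. t * (diffs g n * t ^ n)) = (\<lambda>n. real (Suc n) * g (Suc n) * t ^ Suc n)"
    by (auto simp: diffs_def)
  ultimately have "(\<lambda>n. real (Suc n) * g (Suc n) * t ^ Suc n) sums (t * (\<Sum>n. diffs g n * t ^ n))"
    by simp
  hence "(\<lambda>n. real n * g n * t ^ n) sums (t * (\<Sum>n. diffs g n * t ^ n) + real 0 * g 0 * t ^ 0)"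
    by (subst sums_Suc_iff[symmetric]) simp
  thus ?thesis by simp
qed

definition Bc :: "real \<Rightarrow> real \<Rightarrow> nat \<Rightarrow> real" where
  "Bc \<nu> c n = pochhammer (-(\<nu>+1)) n / fact n * rGamma (c - 1 + real n)"

context
  fixes \<nu> c :: real
  assumes cpos: "c > 0" and nupos: "\<nu> > 0"
begin

lemma summ0: "summable (\<lambda>n. Ac \<nu> c n * t ^ n)"
  using Ac_summable[OF cpos nupos] .

lemma summ1: "summable (\<lambda>n. diffs (Ac \<nu> c) n * t ^ n)"
  by (rule termdiff_converges_all) (rule summ0)

lemma summ2: "summable (\<lambda>n. diffs (diffs (Ac \<nu> c)) n * t ^ n)"
  by (rule termdiff_converges_all) (rule summ1)

lemma derF0: "(F0 \<nu> c has_field_derivative F1 \<nu> c t) (at t)"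
  unfolding F0_def F1_def
  by (rule termdiffs_strong_converges_everywhere) (rule summ0)

lemma derF1: "(F1 \<nu> c has_field_derivative F2 \<nu> c t) (at t)"
  unfolding F1_def F2_def
  by (rule termdiffs_strong_converges_everywhere) (rule summ1)

lemma ode: "t * F2 \<nu> c t + c * F1 \<nu> c t = t * F1 \<nu> c t - \<nu> * F0 \<nu> c t"
proof -
  have s1: "(\<lambda>n. real n * diffs (Ac \<nu> c) n * t ^ n) sums (t * F2 \<nu> c t)"
    unfolding F2_def by (rule shift_sums) (rule summ2)
  have s2: "(\<lambda>n. c * (diffs (Ac \<nu> c) n * t ^ n)) sums (c * F1 \<nu> c t)"
    unfolding F1_def by (intro sums_mult summable_sums summ1)
  have s3: "(\<lambda>n. real n * Ac \<nu> c n * t ^ n) sums (t * F1 \<nu> c t)"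
    unfolding F1_def by (rule shift_sums) (rule summ1)
  have s4: "(\<lambda>n. \<nu> * (Ac \<nu> c n * t ^ n)) sums (\<nu> * F0 \<nu> c t)"
    unfolding F0_def by (intro sums_mult summable_sums summ0)
  have L: "(\<lambda>n. real n * diffs (Ac \<nu> c) n * t ^ n + c * (diffs (Ac \<nu> c) n * t ^ n))
            sums (t * F2 \<nu> c t + c * F1 \<nu> c t)"
    using sums_add[OF s1 s2] .
  have R: "(\<lambda>n. real n * Ac \<nu> c n * t ^ n - \<nu> * (Ac \<nu> c n * t ^ n))
            sums (t * F1 \<nu> c t - \<nu> * F0 \<nu> c t)"
    using sums_diff[OF s3 s4] .
  have eq: "(\<lambda>n. real n * diffs (Ac \<nu> c) n * t ^ n + c * (diffs (Ac \<nu> c) n * t ^ n))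
          = (\<lambda>n. real n * Ac \<nu> c n * t ^ n - \<nu> * (Ac \<nu> c n * t ^ n))"
  proof
    fix n
    have "(real n + c) * diffs (Ac \<nu> c) n = (real n - \<nu>) * Ac \<nu> c n"
      using Ac_Suc[of n c \<nu>] by (simp add: diffs_def algebra_simps)
    thus "real n * diffs (Ac \<nu> c) n * t ^ n + c * (diffs (Ac \<nu> c) n * t ^ n)
          = real n * Ac \<nu> c n * t ^ n - \<nu> * (Ac \<nu> c n * t ^ n)"
      by (metis (no_types, lifting) distrib_right left_diff_distrib mult.assoc)
  qed
  show ?thesis using L R unfolding eq by (rule sums_unique2)
qed


lemma Bc_eq: "Bc \<nu> c n = (c - 1 + real n) * Ac \<nu> c n - (case n of 0 \<Rightarrow> 0 | Suc m \<Rightarrow> Ac \<nu> c m)"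
proof (cases n)
  case 0
  thus ?thesis using rGamma_plus1[of "c - 1"] by (simp add: Bc_def Ac_def)
next
  case (Suc m)
  have a: "(c + real m) * Ac \<nu> c (Suc m) = (real m - \<nu>) * Ac \<nu> c m / (real m + 1)"
    using Ac_Suc[of m c \<nu>] by (simp add: field_simps)
  have b: "Bc \<nu> c (Suc m) = - (\<nu> + 1) / (real m + 1) * Ac \<nu> c m"
    unfolding Bc_def Ac_def by (simp add: pochhammer_rec fact_Suc field_simps)
  have "(c - 1 + real (Suc m)) * Ac \<nu> c (Suc m) - Ac \<nu> c m
        = (real m - \<nu>) * Ac \<nu> c m / (real m + 1) - Ac \<nu> c m" using a by simp
  also have "\<dots> = - (\<nu> + 1) / (real m + 1) * Ac \<nu> c m" by (simp add: field_simps)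
  finally show ?thesis using b Suc by simp
qed

lemma B_sums: "(\<lambda>n. Bc \<nu> c n * t ^ n) sums ((c - 1) * F0 \<nu> c t + t * F1 \<nu> c t - t * F0 \<nu> c t)"
proof -
  have s1: "(\<lambda>n. (c - 1) * (Ac \<nu> c n * t ^ n)) sums ((c - 1) * F0 \<nu> c t)"
    unfolding F0_def by (intro sums_mult summable_sums summ0)
  have s3: "(\<lambda>n. real n * Ac \<nu> c n * t ^ n) sums (t * F1 \<nu> c t)"
    unfolding F1_def by (rule shift_sums) (rule summ1)
  have "(\<lambda>n. t * (Ac \<nu> c n * t ^ n)) sums (t * F0 \<nu> c t)"
    unfolding F0_def by (intro sums_mult summable_sums summ0)
  hence "(\<lambda>n. (case Suc n of 0 \<Rightarrow> 0 | Suc m \<Rightarrow> Ac \<nu> c m) * t ^ Suc n) sums (t * F0 \<nu> c t)"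
    by (simp add: mult_ac)
  hence s5: "(\<lambda>n. (case n of 0 \<Rightarrow> 0 | Suc m \<Rightarrow> Ac \<nu> c m) * t ^ n) sums (t * F0 \<nu> c t)"
    by (subst (asm) sums_Suc_iff) simp
  have "(\<lambda>n. (c - 1) * (Ac \<nu> c n * t ^ n) + real n * Ac \<nu> c n * t ^ n
        - (case n of 0 \<Rightarrow> 0 | Suc m \<Rightarrow> Ac \<nu> c m) * t ^ n)
        sums ((c - 1) * F0 \<nu> c t + t * F1 \<nu> c t - t * F0 \<nu> c t)"
    by (intro sums_diff sums_add s1 s3 s5)
  moreover have "(\<lambda>n. (c - 1) * (Ac \<nu> c n * t ^ n) + real n * Ac \<nu> c n * t ^ n
        - (case n of 0 \<Rightarrow> 0 | Suc m \<Rightarrow> Ac \<nu> c m) * t ^ n) = (\<lambda>n. Bc \<nu> c n * t ^ n)"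
    by (rule ext) (simp add: Bc_eq algebra_simps)
  ultimately show ?thesis by simp
qed


lemma key:
  assumes x: "x > 0"
  shows "F0 \<nu> c (-x) > 0 \<and> - F1 \<nu> c (-x) > 0 \<and>
         x * (- F1 \<nu> c (-x))^2 + (c + x) * F0 \<nu> c (-x) * (- F1 \<nu> c (-x)) - \<nu> * (F0 \<nu> c (-x))^2 > 0"
proof -
  define p where "p = (\<lambda>x. F0 \<nu> c (-x))"
  define q where "q = (\<lambda>x. - F1 \<nu> c (-x))"
  define q2 where "q2 = (\<lambda>x. F2 \<nu> c (-x))"
  have dp: "(p has_real_derivative q y) (at y)" for y
  proof -
    have "((\<lambda>y. F0 \<nu> c (-y)) has_real_derivative F1 \<nu> c (-y) * (-1)) (at y)"
      by (rule DERIV_chain2[OF derF0]) (auto intro!: derivative_eq_intros)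
    thus ?thesis unfolding p_def q_def by simp
  qed
  have dq: "(q has_real_derivative q2 y) (at y)" for y
  proof -
    have "((\<lambda>y. F1 \<nu> c (-y)) has_real_derivative F2 \<nu> c (-y) * (-1)) (at y)"
      by (rule DERIV_chain2[OF derF1]) (auto intro!: derivative_eq_intros)
    hence "((\<lambda>y. - F1 \<nu> c (-y)) has_real_derivative - (F2 \<nu> c (-y) * (-1))) (at y)"
      by (rule DERIV_minus)
    thus ?thesis unfolding q2_def q_def by simp
  qed
  have odeq: "y * q2 y = - (c + y) * q y + \<nu> * p y" for y
    using ode[of "-y"] unfolding p_def q_def q2_def by (simp add: algebra_simps)
  have r1: "c * rGamma (c + 1) = rGamma c" using rGamma_plus1[of c] .
  have r2: "(c + 1) * rGamma (c + 2) = rGamma (c + 1)" using rGamma_plus1[of "c + 1"] by (simp add: add.assoc)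
  have rpos: "rGamma (c + 2) > 0" using cpos by (simp add: rGamma_inverse_Gamma)
  have "p 0 = Ac \<nu> c 0" unfolding p_def F0_def minus_zero by (rule powser_zero)
  hence p0: "p 0 = c * (c + 1) * rGamma (c + 2)"
    using r1 r2 by (simp add: Ac_def mult.assoc)
  have "q 0 = - diffs (Ac \<nu> c) 0" unfolding q_def F1_def minus_zero by (subst powser_zero) (rule refl)
  hence q0: "q 0 = \<nu> * (c + 1) * rGamma (c + 2)"
    using r2 by (simp add: Ac_def diffs_def mult.assoc)
  have "q2 0 = diffs (diffs (Ac \<nu> c)) 0" unfolding q2_def F2_def minus_zero by (rule powser_zero)
  hence q20: "q2 0 = \<nu> * (\<nu> - 1) * rGamma (c + 2)"
    by (simp add: Ac_def diffs_def pochhammer_Suc numeral_2_eq_2 algebra_simps)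
  have p0pos: "p 0 > 0" using p0 cpos rpos by simp
  have q0pos: "q 0 > 0" using q0 cpos nupos rpos by simp
  have pos_of_q: "p y > 0" if yq: "y > 0" "\<And>z. 0 < z \<Longrightarrow> z < y \<Longrightarrow> q z > 0" for y
  proof -
    obtain z where z: "0 < z" "z < y" "p y - p 0 = (y - 0) * q z"
      using MVT2[of 0 y p q, OF yq(1) dp] by blast
    hence "p y - p 0 > 0" using yq by simp
    thus ?thesis using p0pos by simp
  qed
  have qpos: "q y > 0" if "y > 0" for y
  proof (rule first_pos[of q q2 0])
    show "\<And>x. (q has_real_derivative q2 x) (at x)" by (rule dq)
    show "0 \<le> (0::real)" "q 0 > 0" using q0pos by auto
    show "\<And>y. 0 < y \<Longrightarrow> y \<le> 0 \<Longrightarrow> q y > 0" by auto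
    show "0 < q2 z" if "z > 0" "\<forall>y. 0 < y \<and> y < z \<longrightarrow> q y > 0" "q z = 0" for z
    proof -
      have "p z > 0" using pos_of_q[of z] that by blast
      hence "z * q2 z > 0" using odeq[of z] that nupos by simp
      thus ?thesis using that(1) by (simp add: zero_less_mult_iff)
    qed
  qed (rule that)
  have ppos: "p y > 0" if "y > 0" for y using pos_of_q[of y] qpos that by blast
  define H where "H = (\<lambda>y. y * (q y)^2 + (c + y) * p y * q y - \<nu> * (p y)^2)"
  define H' where "H' = (\<lambda>y. (q y)^2 + 2 * y * q y * q2 y + p y * q y
                          + (c + y) * (q y * q y + p y * q2 y) - 2 * \<nu> * p y * q y)"
  have dH: "(H has_real_derivative H' y) (at y)" for y
    unfolding H_def H'_def
    by (auto intro!: derivative_eq_intros dp dq simp: power2_eq_square algebra_simps)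
  have H0: "H 0 = 0" unfolding H_def p0 q0 by (simp add: power2_eq_square algebra_simps)
  have H'0: "H' 0 = (rGamma (c + 2))^2 * (c + 1) * \<nu> * (\<nu> + c)"
    unfolding H'_def p0 q0 q20 by (simp add: power2_eq_square algebra_simps)
  have H'0pos: "H' 0 > 0" unfolding H'0 using rpos cpos nupos by simp
  obtain d where d: "d > 0" "\<And>h. h > 0 \<Longrightarrow> h < d \<Longrightarrow> H 0 < H (0 + h)"
    using DERIV_pos_inc_right[OF dH H'0pos] by blast
  have Hpos: "H y > 0" if "y > 0" for y
  proof (rule first_pos[of H H' "d/2"])
    show "\<And>x. (H has_real_derivative H' x) (at x)" by (rule dH)
    show "0 \<le> d/2" using d by simp
    show "H (d/2) > 0" using d(2)[of "d/2"] d(1) H0 by simp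
    show "\<And>y. 0 < y \<Longrightarrow> y \<le> d/2 \<Longrightarrow> H y > 0" using d H0 by simp
    show "0 < H' z" if "z > 0" "\<forall>y. 0 < y \<and> y < z \<longrightarrow> H y > 0" "H z = 0" for z
    proof -
      have "z * H' z - (- (c + z) * H z + z * (q z * (q z + p z)))
          = (z * q2 z - (- (c + z) * q z + \<nu> * p z)) * (2 * z * q z + (c + z) * p z)"
        unfolding H_def H'_def power2_eq_square by algebra
      hence "z * H' z = - (c + z) * H z + z * (q z * (q z + p z))"
        using odeq[of z] by simp
      hence "z * H' z = z * (q z * (q z + p z))" using that(3) by simp
      hence "H' z = q z * (q z + p z)" using that(1) by simp
      thus ?thesis using qpos[of z] ppos[of z] that(1) by simp
    qed
  qed (rule that)
  show ?thesis using ppos[OF x] qpos[OF x] Hpos[OF x] unfolding p_def q_def H_def by simp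
qed

end


lemma frac_helper: "(p::real) \<noteq> 0 \<Longrightarrow> k \<noteq> 0 \<Longrightarrow> (2 * X / p) / (2 * k) = X / (k * p)"
  by (simp add: field_simps)

lemma frac_helper2: "(G::real) \<noteq> 0 \<Longrightarrow> g \<noteq> 0 \<Longrightarrow> k \<noteq> 0 \<Longrightarrow> p \<noteq> 0 \<Longrightarrow>
   X / (k * p) = (G / (k * g) * X) / (G / g * p)"
  by (simp add: field_simps)

theorem theorem19:
  fixes \<alpha> \<nu> x :: real
  assumes "\<alpha> > -1" and "\<nu> > 0" and "x > 0"
  shows "laguerre_fun (\<nu> + 1) (\<alpha> - 1) (-x) / laguerre_fun \<nu> \<alpha> (-x)
           > (\<alpha> + x - 1 + sqrt ((\<alpha> + x + 1)^2 + 4 * \<nu> * x)) / (2 * (\<nu> + 1))"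
proof -
  define c where "c = \<alpha> + 1"
  have cpos: "c > 0" using assms(1) unfolding c_def by simp
  note nupos = assms(2) and xpos = assms(3)
  define p where "p = F0 \<nu> c (-x)"
  define q where "q = - F1 \<nu> c (-x)"
  have K: "p > 0" "q > 0" "x * q^2 + (c + x) * p * q - \<nu> * p^2 > 0"
    using key[OF cpos nupos xpos] unfolding p_def q_def by auto
  define G where "G = Gamma (\<nu> + \<alpha> + 1)"
  define g where "g = Gamma (\<nu> + 1)"
  have Gpos: "G > 0" unfolding G_def using assms by simp
  have gpos: "g > 0" unfolding g_def using assms by simp
  have g2: "Gamma (\<nu> + 1 + 1) = (\<nu> + 1) * g"
    unfolding g_def using nupos by (intro Gamma_plus1) (auto elim!: nonpos_Ints_cases)
  have den: "laguerre_fun \<nu> \<alpha> (-x) = G / g * p"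
  proof -
    have "(\<lambda>k. pochhammer (-\<nu>) k * (-x) ^ k / fact k * rGamma (\<alpha> + 1 + real k))
          = (\<lambda>k. Ac \<nu> c k * (-x) ^ k)"
      by (rule ext) (simp add: Ac_def c_def)
    thus ?thesis unfolding laguerre_fun_def G_def g_def p_def F0_def by simp
  qed
  have num: "laguerre_fun (\<nu> + 1) (\<alpha> - 1) (-x) = G / ((\<nu> + 1) * g) * ((c - 1 + x) * p + x * q)"
  proof -
    have "(\<lambda>k. pochhammer (-(\<nu> + 1)) k * (-x) ^ k / fact k * rGamma (\<alpha> - 1 + 1 + real k))
          = (\<lambda>k. Bc \<nu> c k * (-x) ^ k)"
      unfolding Bc_def c_def by (rule ext) (simp add: algebra_simps)
    moreover have "(\<Sum>k. Bc \<nu> c k * (-x) ^ k) = (c - 1 + x) * p + x * q"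
      using sums_unique[OF B_sums[OF cpos nupos, of "-x"]] unfolding p_def q_def
      by (simp add: algebra_simps)
    moreover have "Gamma (\<nu> + 1 + (\<alpha> - 1) + 1) = G" unfolding G_def by (simp add: algebra_simps)
    ultimately show ?thesis unfolding laguerre_fun_def g2 by simp
  qed
  define b where "b = ((c + x) * p + 2 * x * q) / p"
  have bpos: "b > 0" unfolding b_def using K(1,2) cpos xpos
    by (intro divide_pos_pos add_pos_pos mult_pos_pos) auto
  have "b^2 - ((c + x)^2 + 4 * \<nu> * x) = 4 * x * (x * q^2 + (c + x) * p * q - \<nu> * p^2) / p^2"
    unfolding b_def using K(1) by (simp add: field_simps power2_eq_square)
  also have "\<dots> > 0" using K xpos by simp
  finally have "(c + x)^2 + 4 * \<nu> * x < b^2" by simp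
  hence "sqrt ((c + x)^2 + 4 * \<nu> * x) < sqrt (b^2)" by (rule real_sqrt_less_mono)
  hence S: "sqrt ((\<alpha> + x + 1)^2 + 4 * \<nu> * x) < b" using bpos unfolding c_def by (simp add: add_ac)
  have "(\<alpha> + x - 1 + sqrt ((\<alpha> + x + 1)^2 + 4 * \<nu> * x)) / (2 * (\<nu> + 1))
        < (\<alpha> + x - 1 + b) / (2 * (\<nu> + 1))"
    using S nupos by (simp add: divide_strict_right_mono)
  also have "\<dots> = ((c - 1 + x) * p + x * q) / ((\<nu> + 1) * p)"
  proof -
    have e: "\<alpha> + x - 1 + b = 2 * ((c - 1 + x) * p + x * q) / p"
      unfolding b_def c_def using K(1) by (simp add: field_simps)
    have n0: "\<nu> + 1 \<noteq> 0" "p \<noteq> 0" "2 * \<nu> + 2 \<noteq> 0" using nupos K(1) by auto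
    show ?thesis unfolding e by (rule frac_helper[OF n0(2,1)])
  qed
  also have "\<dots> = laguerre_fun (\<nu> + 1) (\<alpha> - 1) (-x) / laguerre_fun \<nu> \<alpha> (-x)"
    unfolding num den using Gpos gpos K(1) nupos by (intro frac_helper2) auto
  finally show ?thesis .
qed

end
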